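(* Let $Z_0, Z_1, Z_2 \in \{0,1\}^K$ be fixed products, and let $Y(Z_1,Z_0)$, $Y(Z_2,Z_0)$, $Y(Z_1,Z_2)$ be binary choice outcomes of a respondent generated by the random utility model described in the context. Then the conditional distribution of $Y(Z_1,Z_0) - Y(Z_2,Z_0)$ given the event $\{Y(Z_1,Z_0) \neq Y(Z_2,Z_0)\}$ equals the distribution of $2Y(Z_1,Z_2) - 1$; that is, $$Y(Z_1,Z_0) - Y(Z_2,Z_0) \,\big|\, \{Y(Z_1,Z_0) \neq Y(Z_2,Z_0)\} \ \stackrel{d}{=}\ 2Y(Z_1,Z_2) - 1 .$$
   Context: Products are binary vectors in $\{0,1\}^K$. For two products $A,B$, the choice outcome $Y(A,B)\in\{0,1\}$ equals $1$ if the respondent chooses $A$ over $B$ and $0$ if $B$ is chosen. Choices follow the random utility maximisation model: each product $Z$ has utility $U(Z)+\epsilon$, where $U:\{0,1\}^K\to\mathbb{R}$ is a deterministic (representative) utility and the noise terms are independent standard Gumbel (type I extreme value) random variables, drawn independently for each product in each comparison; the alternative with larger total utility is chosen. Consequently $P(Y(A,B)=1) = \frac{e^{U(A)}}{e^{U(A)}+e^{U(B)}}$, and the outcomes of distinct paired comparisons (here $Y(Z_1,Z_0)$ and $Y(Z_2,Z_0)$) are independent. *)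

theory Defs
  imports "HOL-Probability.Probability"
begin

text \<open>Products are binary vectors in {0,1}^K, rendered as functions from a finite
index type 'k (with K = CARD('k)) to bool.  Under the random utility model with
i.i.d. standard Gumbel noise, the probability that A is chosen over B is the
logit probability below.\<close>

definition choice_prob :: "(('k::finite \<Rightarrow> bool) \<Rightarrow> real) \<Rightarrow> ('k \<Rightarrow> bool) \<Rightarrow> ('k \<Rightarrow> bool) \<Rightarrow> real" where
  "choice_prob U A B = exp (U A) / (exp (U A) + exp (U B))"

end

theory Submission
  imports Defs
begin

lemma cp_pos: "0 < choice_prob U A B" "choice_prob U A B < 1"
  unfolding choice_prob_def
  by (auto simp: divide_less_eq add_pos_pos)

lemma alg:
  fixes a b c :: real
  assumes "a > 0" "b > 0" "c > 0"
  shows "a / (a + b) = a/(a+c) * (1 - b/(b+c)) / (a/(a+c) * (1 - b/(b+c)) + (1 - a/(a+c)) * (b/(b+c)))"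
proof -
  have e1: "1 - b/(b+c) = c/(b+c)" "1 - a/(a+c) = c/(a+c)" using assms by (simp_all add: field_simps)
  have n: "a/(a+c) * (c/(b+c)) = (a*c) / ((a+c)*(b+c))" by simp
  have m: "c/(a+c) * (b/(b+c)) = (b*c) / ((a+c)*(b+c))" by simp
  have d: "(a*c) / ((a+c)*(b+c)) + (b*c) / ((a+c)*(b+c)) = ((a+b)*c) / ((a+c)*(b+c))"
    by (simp add: add_divide_distrib distrib_right)
  have "(a*c) / ((a+c)*(b+c)) / (((a+b)*c) / ((a+c)*(b+c))) = (a*c) / ((a+b)*c)"
    using assms by (simp add: divide_divide_eq_left)
  also have "\<dots> = a / (a+b)" using assms by simp
  finally show ?thesis unfolding e1 n m d by simp
qed

theorem lemma2:
  fixes M :: "'a measure"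
    and U :: "('k::finite \<Rightarrow> bool) \<Rightarrow> real"
    and Z0 Z1 Z2 :: "'k \<Rightarrow> bool"
    and Y10 Y20 Y12 :: "'a \<Rightarrow> int"
  assumes "prob_space M"
    and "Y10 \<in> measurable M (count_space UNIV)"
    and "Y20 \<in> measurable M (count_space UNIV)"
    and "Y12 \<in> measurable M (count_space UNIV)"
    and "\<forall>\<omega>\<in>space M. Y10 \<omega> \<in> {0, 1}"
    and "\<forall>\<omega>\<in>space M. Y20 \<omega> \<in> {0, 1}"
    and "\<forall>\<omega>\<in>space M. Y12 \<omega> \<in> {0, 1}"
    and "\<P>(\<omega> in M. Y10 \<omega> = 1) = choice_prob U Z1 Z0"
    and "\<P>(\<omega> in M. Y20 \<omega> = 1) = choice_prob U Z2 Z0"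
    and "\<P>(\<omega> in M. Y12 \<omega> = 1) = choice_prob U Z1 Z2"
    and "prob_space.indep_var M (count_space UNIV) Y10 (count_space UNIV) Y20"
  shows "\<forall>v::int. \<P>(\<omega> in M. Y10 \<omega> - Y20 \<omega> = v \<bar> Y10 \<omega> \<noteq> Y20 \<omega>)
                  = \<P>(\<omega> in M. 2 * Y12 \<omega> - 1 = v)"
proof
  fix v :: int
  interpret prob_space M by fact
  have ev: "{\<omega> \<in> space M. P (Y \<omega>)} \<in> sets M" if "Y \<in> measurable M (count_space UNIV)" for Y :: "'a \<Rightarrow> int" and P
  proof -
    have "{\<omega> \<in> space M. P (Y \<omega>)} = Y -` {x. P x} \<inter> space M" by auto
    then show ?thesis using measurable_sets[OF that, of "{x. P x}"] by simp
  qed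
  have ev2: "{\<omega> \<in> space M. P (Y10 \<omega>) (Y20 \<omega>)} \<in> sets M" for P
  proof -
    have m: "(\<lambda>\<omega>. (Y10 \<omega>, Y20 \<omega>)) \<in> measurable M (count_space UNIV \<Otimes>\<^sub>M count_space UNIV)"
      using assms(2,3) by measurable
    have "{\<omega> \<in> space M. P (Y10 \<omega>) (Y20 \<omega>)} = (\<lambda>\<omega>. (Y10 \<omega>, Y20 \<omega>)) -` {(x,y). P x y} \<inter> space M" by auto
    moreover have "{(x::int,y::int). P x y} \<in> sets (count_space UNIV \<Otimes>\<^sub>M count_space UNIV)"
      by (subst pair_measure_countable) auto
    ultimately show ?thesis using measurable_sets[OF m, of "{(x,y). P x y}"] by (simp add: vimage_def)
  qed
  have zero: "\<P>(\<omega> in M. Y \<omega> = 0) = 1 - \<P>(\<omega> in M. Y \<omega> = 1)"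
    if "Y \<in> measurable M (count_space UNIV)" "\<forall>\<omega>\<in>space M. Y \<omega> \<in> {0, 1}" for Y :: "'a \<Rightarrow> int"
  proof -
    have "\<P>(\<omega> in M. Y \<omega> = 0) = \<P>(\<omega> in M. \<not> Y \<omega> = 1)"
      using that(2) by (intro arg_cong[where f=prob]) auto
    also have "\<dots> = 1 - \<P>(\<omega> in M. Y \<omega> = 1)"
      by (rule prob_neg) (rule ev[OF that(1)])
    finally show ?thesis .
  qed
  define p1 where "p1 = choice_prob U Z1 Z0"
  define p2 where "p2 = choice_prob U Z2 Z0"
  define q where "q = choice_prob U Z1 Z2"
  have ind: "indep_var (count_space UNIV) Y10 (count_space UNIV) Y20" using assms(11) .
  have A: "\<P>(\<omega> in M. Y10 \<omega> = 1 \<and> Y20 \<omega> = 0) = p1 * (1 - p2)"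
  proof -
    have "\<P>(\<omega> in M. Y10 \<omega> = 1 \<and> Y20 \<omega> = 0) = \<P>(\<omega> in M. Y10 \<omega> \<in> {1} \<and> Y20 \<omega> \<in> {0})" by simp
    also have "\<dots> = \<P>(\<omega> in M. Y10 \<omega> \<in> {1}) * \<P>(\<omega> in M. Y20 \<omega> \<in> {0})"
      by (rule prob_indep_random_variable[OF ind]) auto
    also have "\<dots> = p1 * (1 - p2)"
      using assms(8,9) zero[OF assms(3,6)] by (simp add: p1_def p2_def)
    finally show ?thesis .
  qed
  have B: "\<P>(\<omega> in M. Y10 \<omega> = 0 \<and> Y20 \<omega> = 1) = (1 - p1) * p2"
  proof -
    have "\<P>(\<omega> in M. Y10 \<omega> = 0 \<and> Y20 \<omega> = 1) = \<P>(\<omega> in M. Y10 \<omega> \<in> {0} \<and> Y20 \<omega> \<in> {1})" by simp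
    also have "\<dots> = \<P>(\<omega> in M. Y10 \<omega> \<in> {0}) * \<P>(\<omega> in M. Y20 \<omega> \<in> {1})"
      by (rule prob_indep_random_variable[OF ind]) auto
    also have "\<dots> = (1 - p1) * p2"
      using assms(8,9) zero[OF assms(2,5)] by (simp add: p1_def p2_def)
    finally show ?thesis .
  qed
  have D: "\<P>(\<omega> in M. Y10 \<omega> \<noteq> Y20 \<omega>) = p1 * (1 - p2) + (1 - p1) * p2"
  proof -
    have "\<P>(\<omega> in M. Y10 \<omega> \<noteq> Y20 \<omega>) = prob ({\<omega> \<in> space M. Y10 \<omega> = 1 \<and> Y20 \<omega> = 0} \<union> {\<omega> \<in> space M. Y10 \<omega> = 0 \<and> Y20 \<omega> = 1})"
      using assms(5,6) by (intro arg_cong[where f=prob]) fastforce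
    also have "\<dots> = \<P>(\<omega> in M. Y10 \<omega> = 1 \<and> Y20 \<omega> = 0) + \<P>(\<omega> in M. Y10 \<omega> = 0 \<and> Y20 \<omega> = 1)"
      by (rule finite_measure_Union) (auto intro: ev2)
    finally show ?thesis using A B by simp
  qed
  have p1: "0 < p1" "p1 < 1" and p2: "0 < p2" "p2 < 1" using cp_pos unfolding p1_def p2_def by auto
  have qv: "q = p1 * (1 - p2) / (p1 * (1 - p2) + (1 - p1) * p2)"
    unfolding q_def p1_def p2_def choice_prob_def
    by (rule alg) auto
  have Dpos: "p1 * (1 - p2) + (1 - p1) * p2 > 0" using p1 p2 by (simp add: add_pos_pos)
  consider "v = 1" | "v = -1" | "v \<noteq> 1 \<and> v \<noteq> -1" by blast
  then show "\<P>(\<omega> in M. Y10 \<omega> - Y20 \<omega> = v \<bar> Y10 \<omega> \<noteq> Y20 \<omega>) = \<P>(\<omega> in M. 2 * Y12 \<omega> - 1 = v)"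
  proof cases
    case 1
    have "\<P>(\<omega> in M. Y10 \<omega> - Y20 \<omega> = v \<and> Y10 \<omega> \<noteq> Y20 \<omega>) = \<P>(\<omega> in M. Y10 \<omega> = 1 \<and> Y20 \<omega> = 0)"
      using assms(5,6) 1 by (intro arg_cong[where f=prob]) fastforce
    moreover have "\<P>(\<omega> in M. 2 * Y12 \<omega> - 1 = v) = \<P>(\<omega> in M. Y12 \<omega> = 1)"
      using 1 by (intro arg_cong[where f=prob]) auto
    ultimately show ?thesis using A D qv assms(10) by (simp add: cond_prob_def q_def)
  next
    case 2
    have "\<P>(\<omega> in M. Y10 \<omega> - Y20 \<omega> = v \<and> Y10 \<omega> \<noteq> Y20 \<omega>) = \<P>(\<omega> in M. Y10 \<omega> = 0 \<and> Y20 \<omega> = 1)"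
      using assms(5,6) 2 by (intro arg_cong[where f=prob]) fastforce
    moreover have "\<P>(\<omega> in M. 2 * Y12 \<omega> - 1 = v) = \<P>(\<omega> in M. Y12 \<omega> = 0)"
      using 2 by (intro arg_cong[where f=prob]) auto
    moreover have "1 - q = (1 - p1) * p2 / (p1 * (1 - p2) + (1 - p1) * p2)"
      using qv Dpos by (simp add: field_simps)
    ultimately show ?thesis using B D zero[OF assms(4,7)] assms(10) by (simp add: cond_prob_def q_def)
  next
    case 3
    have "\<P>(\<omega> in M. Y10 \<omega> - Y20 \<omega> = v \<and> Y10 \<omega> \<noteq> Y20 \<omega>) = prob {}"
      using assms(5,6) 3 by (intro arg_cong[where f=prob]) fastforce
    moreover have "\<P>(\<omega> in M. 2 * Y12 \<omega> - 1 = v) = prob {}"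
      using assms(7) 3 by (intro arg_cong[where f=prob]) fastforce
    ultimately show ?thesis by (simp add: cond_prob_def)
  qed
qed

end
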